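(* Let $\ell\ge 3$ be prime. Let $r,s,t$ be positive integers with $\gcd(r,s,t)=1$. Let $q=2k\ell+1$ be a prime (with $k$ a positive integer) that does not divide $r$. Define \[ \mu(\ell,q)=\{\eta^{2\ell}:\eta\in\mathbb{F}_q\}=\{0\}\cup\{\zeta\in\mathbb{F}_q^*:\zeta^k=1\} \] and \[ B(\ell,q)=\left\{\zeta\in\mu(\ell,q): \big((s\zeta+t)/r\big)^{2k}\in\{0,1\}\right\}\subseteq \mathbb{F}_q . \] If $B(\ell,q)=\emptyset$, then the equation $r y_2^\ell-s y_1^{2\ell}=t$ has no solutions in integers $y_1,y_2$. *)

theory Defs
  imports "HOL-Number_Theory.Number_Theory"
begin

text \<open>Elements of F_q are represented by their residues in {0..q-1}.
  mu l q = set of 2l-th powers in F_q.\<close>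
definition mu :: "nat \<Rightarrow> nat \<Rightarrow> int set" where
  "mu l q = {(\<eta> ^ (2 * l)) mod int q | \<eta>. \<eta> \<in> {0..<int q}}"

text \<open>B(l,q): those zeta in mu with ((s zeta + t)/r)^(2k) in {0,1} in F_q,
  where the quotient w = (s zeta + t)/r in F_q is the residue w with r w = s zeta + t.\<close>
definition Bset :: "nat \<Rightarrow> nat \<Rightarrow> nat \<Rightarrow> int \<Rightarrow> int \<Rightarrow> int \<Rightarrow> int set" where
  "Bset l q k r s t = {\<zeta> \<in> mu l q. \<exists>w \<in> {0..<int q}. [r * w = s * \<zeta> + t] (mod int q) \<and>
       ((w ^ (2 * k)) mod int q = 0 \<or> (w ^ (2 * k)) mod int q = 1)}"

end

theory Submission
  imports Defs
begin

theorem lemma6p1: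
  fixes l q k :: nat and r s t :: int
  assumes "prime l" and "l \<ge> 3"
    and "r > 0" and "s > 0" and "t > 0"
    and "gcd r (gcd s t) = 1"
    and "k > 0" and "q = 2 * k * l + 1" and "prime q"
    and "\<not> int q dvd r"
    and "Bset l q k r s t = {}"
  shows "\<not> (\<exists>y1 y2 :: int. r * y2 ^ l - s * y1 ^ (2 * l) = t)"
proof
  assume "\<exists>y1 y2 :: int. r * y2 ^ l - s * y1 ^ (2 * l) = t"
  then obtain y1 y2 :: int where eq: "r * y2 ^ l - s * y1 ^ (2 * l) = t" by blast
  have q1: "q > 1" using assms(9) prime_gt_1_nat by blast
  define Q where "Q = int q"
  have Q1: "Q > 1" using q1 Q_def by simp
  define \<eta> where "\<eta> = y1 mod Q"
  define \<zeta> where "\<zeta> = \<eta> ^ (2*l) mod Q"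
  define w where "w = (y2 mod Q) ^ l mod Q"
  have zmu: "\<zeta> \<in> mu l q" unfolding mu_def \<zeta>_def \<eta>_def Q_def using Q1 Q_def by auto
  have w0: "w \<in> {0..<int q}" unfolding w_def Q_def using Q1 Q_def by auto
  have c1: "[\<zeta> = y1 ^ (2*l)] (mod Q)" unfolding \<zeta>_def \<eta>_def cong_def
    by (simp add: power_mod)
  have c2: "[w = y2 ^ l] (mod Q)" unfolding w_def cong_def by (simp add: power_mod)
  have "[r * w = r * y2 ^ l] (mod Q)" using c2 cong_scalar_left by blast
  moreover have "[s * \<zeta> + t = s * y1 ^ (2*l) + t] (mod Q)"
    using c1 cong_add_rcancel cong_scalar_left by blast
  moreover have "r * y2 ^ l = s * y1 ^ (2*l) + t" using eq by simp
  ultimately have c3: "[r * w = s * \<zeta> + t] (mod Q)"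
    by (metis cong_sym cong_trans)
  define a where "a = nat (y2 mod Q)"
  have ia: "int a = y2 mod Q" unfolding a_def using Q1 by simp
  have "y2 mod Q < Q" using Q1 by simp
  hence aq: "a < q" using ia Q_def by linarith
  have "w ^ (2*k) mod Q = (int a) ^ (l * (2*k)) mod Q"
  proof -
    have "w ^ (2*k) mod Q = ((y2 mod Q) ^ l) ^ (2*k) mod Q"
      unfolding w_def by (rule power_mod)
    also have "\<dots> = (int a) ^ (l * (2*k)) mod Q" by (simp add: ia power_mult)
    finally show ?thesis .
  qed
  also have "l * (2*k) = q - 1" using assms(8) by simp
  finally have wk: "w ^ (2*k) mod Q = int (a ^ (q-1)) mod Q" by simp
  have "w ^ (2*k) mod int q = 0 \<or> w ^ (2*k) mod int q = 1"
  proof (cases "a = 0")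
    case True
    have "q - Suc 0 > 0" using q1 by simp
    then have h0: "a ^ (q - 1) = 0" using True by simp
    have "w ^ (2*k) mod Q = 0" using wk by (simp only: h0 of_nat_0 mod_0)
    then show ?thesis using Q_def by simp
  next
    case False
    then have "\<not> q dvd a" using aq by (auto dest: dvd_imp_le)
    then have "[a ^ (q-1) = 1] (mod q)" using fermat_theorem assms(9) by blast
    then have "a ^ (q-1) mod q = 1" unfolding cong_def using q1 by simp
    then have "int (a ^ (q-1)) mod Q = 1" unfolding Q_def
      by (metis of_nat_1 of_nat_mod)
    then show ?thesis using wk Q_def by simp
  qed
  then have "\<zeta> \<in> Bset l q k r s t" unfolding Bset_def Q_def[symmetric] using zmu w0 c3 Q_def by auto
  then show False using assms(11) by blast
qed

end
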